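(* Let $n$ be an even positive integer. The associated core group $\Pi^{(2)}_{L}$ of an unoriented welded link $L$ is preserved by unoriented $V^{n}$-moves.
   Context: An unoriented virtual link diagram is the image of an immersion of finitely many circles in the plane with transverse double points, each a classical crossing (with over/under information) or a virtual crossing. Welded Reidemeister moves are R1–R3, the virtual moves VR1–VR4, and the OC move (a strand passing over two strands at classical crossings may slide across a virtual crossing of those two strands); an unoriented welded link is an equivalence class of unoriented diagrams under these moves. The associated core group $\Pi^{(2)}_D$ of an unoriented virtual link diagram $D$ has one generator for each arc of $D$ (arcs run from under-crossing to under-crossing, passing through virtual crossings, which contribute no generators or relations) and one relation $yx^{-1}yz^{-1}$ for each classical crossing, where $x,z$ are the two under-arcs and $y$ is the over-arc at that crossing. It is invariant under welded Reidemeister moves, and $\Pi^{(2)}_L:=\Pi^{(2)}_D$ for a diagram $D$ of $L$. The unoriented $V^{n}$-move: inside a disk the diagram consists of two arcs $a,b$ running side by side; on one side of the move they are parallel without crossings; on the other side (same endpoints) the tangle is the $2$-braid word $(\sigma\tau)^{n}$, where $\sigma$ is a classical crossing with $b$ over $a$ and $\tau$ a virtual crossing; orientations are disregarded. The move replaces one side by the other. *)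

theory Defs
  imports "HOL-Algebra.Group"
begin

text \<open>A letter (g, True) stands for the generator g, (g, False) for its inverse.\<close>
type_synonym 'g word = "('g \<times> bool) list"

inductive pres_eq :: "'g word set \<Rightarrow> 'g word \<Rightarrow> 'g word \<Rightarrow> bool" for R where
  refl: "pres_eq R w w"
| sym: "pres_eq R u v \<Longrightarrow> pres_eq R v u"
| trans: "pres_eq R u v \<Longrightarrow> pres_eq R v w \<Longrightarrow> pres_eq R u w"
| cancel: "pres_eq R (u @ [(g, b), (g, \<not> b)] @ v) (u @ v)"
| relator: "r \<in> R \<Longrightarrow> pres_eq R (u @ r @ v) (u @ v)"

definition words :: "'g set \<Rightarrow> 'g word set" where
  "words S = {w. fst ` set w \<subseteq> S}"

definition pres_class :: "'g set \<Rightarrow> 'g word set \<Rightarrow> 'g word \<Rightarrow> 'g word set" where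
  "pres_class S R w = {v \<in> words S. pres_eq R w v}"

text \<open>The group with generators S and relators R (R should consist of words over S).\<close>
definition presented_group :: "'g set \<Rightarrow> 'g word set \<Rightarrow> 'g word set monoid" where
  "presented_group S R =
     \<lparr> carrier = pres_class S R ` words S,
       mult = (\<lambda>A B. {w \<in> words S. \<exists>u\<in>A. \<exists>v\<in>B. pres_eq R (u @ v) w}),
       one = pres_class S R [] \<rparr>"

text \<open>A diagram is a list of components (circles); each component is the cyclic
  sequence of classical crossing points met along it, read in an arbitrary direction;
  a point (c, True) is the over-passage and (c, False) the under-passage of crossing c.
  Virtual crossings are invisible (they contribute neither generators nor relations).\<close>
type_synonym 'c gauss = "('c \<times> bool) list list"

definition wf_gauss :: "'c gauss \<Rightarrow> bool" where
  "wf_gauss D \<longleftrightarrow> distinct (concat D) \<and>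
     (\<forall>c. (c, True) \<in> set (concat D) \<longleftrightarrow> (c, False) \<in> set (concat D))"

text \<open>Arcs: the arc starting at the under-passage of crossing c (going in list
  direction) is Arc c; a component without under-passages is a single arc Circ i.\<close>
datatype 'c arc = Arc 'c | Circ nat

definition arc_before :: "('c \<times> bool) list \<Rightarrow> nat \<Rightarrow> nat \<Rightarrow> 'c arc" where
  "arc_before w i j =
     (case find (\<lambda>p. \<not> snd p) (rev (take j w) @ rev (drop (Suc j) w) @ [w ! j]) of
        None \<Rightarrow> Circ i
      | Some p \<Rightarrow> Arc (fst p))"

definition crossings :: "'c gauss \<Rightarrow> 'c set" where
  "crossings D = {c. (c, False) \<in> set (concat D)}"

definition position :: "'c gauss \<Rightarrow> ('c \<times> bool) \<Rightarrow> nat \<times> nat" where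
  "position D p = (SOME ij. fst ij < length D \<and> snd ij < length (D ! fst ij)
                              \<and> D ! fst ij ! snd ij = p)"

text \<open>The arc containing an over-passage point; for an under-passage point, the arc
  ending there.\<close>
definition arc_at :: "'c gauss \<Rightarrow> ('c \<times> bool) \<Rightarrow> 'c arc" where
  "arc_at D p = (case position D p of (i, j) \<Rightarrow> arc_before (D ! i) i j)"

definition core_gens :: "'c gauss \<Rightarrow> 'c arc set" where
  "core_gens D = Arc ` crossings D \<union> {Circ i | i. i < length D \<and> (\<forall>p\<in>set (D ! i). snd p)}"

text \<open>Relation y x^-1 y z^-1 at crossing c: y over-arc, x and z the two under-arcs.\<close>
definition core_rel :: "'c gauss \<Rightarrow> 'c \<Rightarrow> 'c arc word" where
  "core_rel D c = (let y = arc_at D (c, True); x = arc_at D (c, False)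
                   in [(y, True), (x, False), (y, True), (Arc c, False)])"

definition core_rels :: "'c gauss \<Rightarrow> 'c arc word set" where
  "core_rels D = core_rel D ` crossings D"

definition core_group :: "'c gauss \<Rightarrow> 'c arc word set monoid" where
  "core_group D = presented_group (core_gens D) (core_rels D)"

definition cyc_block :: "'a list \<Rightarrow> 'a list \<Rightarrow> bool" where
  "cyc_block w xs \<longleftrightarrow> (\<exists>k. take (length xs) (rotate k w) = xs)"

text \<open>D' arises from D by a V^n-move: n new crossings c_1..c_n, all with the b-strand
  over the a-strand; along strand a they form a cyclically consecutive block of
  under-passages c_1..c_n, along strand b a consecutive block of over-passages in the
  same or the reversed order (the diagram is unoriented); deleting them gives D back.\<close>
definition vmove :: "nat \<Rightarrow> 'c gauss \<Rightarrow> 'c gauss \<Rightarrow> bool" where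
  "vmove n D D' \<longleftrightarrow> (\<exists>cs. length cs = n \<and> distinct cs \<and>
      (\<forall>c\<in>set cs. c \<notin> fst ` set (concat D)) \<and>
      map (filter (\<lambda>p. fst p \<notin> set cs)) D' = D \<and>
      (\<exists>i<length D'. cyc_block (D' ! i) (map (\<lambda>c. (c, False)) cs)) \<and>
      (\<exists>i<length D'. cyc_block (D' ! i) (map (\<lambda>c. (c, True)) cs) \<or>
                     cyc_block (D' ! i) (map (\<lambda>c. (c, True)) (rev cs))))"

end

theory Submission
  imports Defs
begin


definition inv_letter :: "'g \<times> bool \<Rightarrow> 'g \<times> bool" where
  "inv_letter p = (fst p, \<not> snd p)"

definition inv_word :: "'g word \<Rightarrow> 'g word" where
  "inv_word w = rev (map inv_letter w)"

lemma inv_word_simps[simp]: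
  "inv_word [] = []" "inv_word (x # w) = inv_word w @ [inv_letter x]"
  "inv_word (u @ v) = inv_word v @ inv_word u"
  by (auto simp: inv_word_def)

lemma inv_inv_word[simp]: "inv_word (inv_word w) = w"
  by (induct w) (auto simp: inv_letter_def)

lemma pres_cong: "pres_eq R a b \<Longrightarrow> pres_eq R (u @ a @ v) (u @ b @ v)"
proof (induct rule: pres_eq.induct)
  case (refl w) then show ?case by (rule pres_eq.refl)
next
  case (sym u v) then show ?case by (blast intro: pres_eq.sym)
next
  case (trans u v w) then show ?case by (blast intro: pres_eq.trans)
next
  case (cancel u' g b v')
  have "pres_eq R ((u @ u') @ [(g, b), (g, \<not> b)] @ (v' @ v)) ((u @ u') @ (v' @ v))"
    by (rule pres_eq.cancel)
  then show ?case by simp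
next
  case (relator r u' v')
  have "pres_eq R ((u @ u') @ r @ (v' @ v)) ((u @ u') @ (v' @ v))"
    by (rule pres_eq.relator) fact
  then show ?case by simp
qed

lemma pres_cong2: "pres_eq R a b \<Longrightarrow> pres_eq R c d \<Longrightarrow> pres_eq R (a @ c) (b @ d)"
  using pres_cong[of R a b "[]" c] pres_cong[of R c d b "[]"]
  by (auto intro: pres_eq.trans)

lemma pres_cancel_word: "pres_eq R (u @ x @ inv_word x @ v) (u @ v)"
proof (induct x arbitrary: u rule: rev_induct)
  case Nil then show ?case by (simp add: pres_eq.refl)
next
  case (snoc a x)
  obtain g b where a: "a = (g, b)" by force
  have "pres_eq R ((u @ x) @ [(g, b), (g, \<not> b)] @ (inv_word x @ v)) ((u @ x) @ (inv_word x @ v))"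
    by (rule pres_eq.cancel)
  then have "pres_eq R (u @ (x @ [a]) @ inv_word (x @ [a]) @ v) (u @ x @ inv_word x @ v)"
    by (simp add: a inv_word_def inv_letter_def)
  then show ?case using snoc by (blast intro: pres_eq.trans)
qed

lemma pres_cancel_word': "pres_eq R (u @ inv_word x @ x @ v) (u @ v)"
  using pres_cancel_word[of R u "inv_word x" v] by simp

lemma pres_inv_cong: "pres_eq R a b \<Longrightarrow> pres_eq R (inv_word a) (inv_word b)"
proof -
  assume ab: "pres_eq R a b"
  have 1: "pres_eq R (inv_word a @ a @ inv_word b) (inv_word b)"
    using pres_cancel_word'[of R "[]" a "inv_word b"] by simp
  have 2: "pres_eq R (inv_word a @ a @ inv_word b) (inv_word a @ b @ inv_word b)"
    using pres_cong[OF ab, of "inv_word a" "inv_word b"] .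
  have 3: "pres_eq R (inv_word a @ b @ inv_word b) (inv_word a)"
    using pres_cancel_word[of R "inv_word a" b "[]"] by simp
  show ?thesis using 1 2 3 by (blast intro: pres_eq.trans pres_eq.sym)
qed

lemma pres_rel_nil: "r \<in> R \<Longrightarrow> pres_eq R r []"
  using pres_eq.relator[of r R "[]" "[]"] by simp

definition subst :: "('g \<Rightarrow> 'h word) \<Rightarrow> 'g word \<Rightarrow> 'h word" where
  "subst f w = concat (map (\<lambda>p. if snd p then f (fst p) else inv_word (f (fst p))) w)"

lemma subst_simps[simp]:
  "subst f [] = []" "subst f (p # w) = (if snd p then f (fst p) else inv_word (f (fst p))) @ subst f w"
  "subst f (u @ v) = subst f u @ subst f v"
  by (auto simp: subst_def)

lemma subst_inv: "subst f (inv_word w) = inv_word (subst f w)"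
  by (induct w) (auto simp: inv_letter_def)

lemma subst_subst: "subst g (subst f w) = subst (\<lambda>x. subst g (f x)) w"
  by (induct w) (auto simp: subst_inv)

lemma subst_pres:
  assumes hr: "\<And>r. r \<in> R \<Longrightarrow> pres_eq R' (subst f r) []"
  shows "pres_eq R u v \<Longrightarrow> pres_eq R' (subst f u) (subst f v)"
proof (induct rule: pres_eq.induct)
  case (refl w) then show ?case by (rule pres_eq.refl)
next
  case (sym u v) then show ?case by (blast intro: pres_eq.sym)
next
  case (trans u v w) then show ?case by (blast intro: pres_eq.trans)
next
  case (cancel u g b v)
  show ?case
  proof (cases b)
    case True
    then show ?thesis using pres_cancel_word[of R' "subst f u" "f g" "subst f v"] by simp
  next
    case False
    then show ?thesis using pres_cancel_word'[of R' "subst f u" "f g" "subst f v"] by simp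
  qed
next
  case (relator r u v)
  then show ?case using pres_cong[OF hr[OF relator], of "subst f u" "subst f v"] by simp
qed

lemma subst_letters:
  assumes "\<And>x. x \<in> fst ` set w \<Longrightarrow> pres_eq R (k x) [(x, True)]"
  shows "pres_eq R (subst k w) w"
  using assms
proof (induct w)
  case Nil then show ?case by (simp add: pres_eq.refl)
next
  case (Cons p w)
  obtain x b where p: "p = (x, b)" by force
  have kx: "pres_eq R (k x) [(x, True)]" using Cons.prems p by auto
  have IH: "pres_eq R (subst k w) w" using Cons by auto
  have h: "pres_eq R (if b then k x else inv_word (k x)) [(x, b)]"
    using kx pres_inv_cong[OF kx] by (auto simp: inv_letter_def)
  from pres_cong2[OF h IH] show ?case by (cases b) (simp_all add: p)
qed

lemma words_append[simp]: "u @ v \<in> words S \<longleftrightarrow> u \<in> words S \<and> v \<in> words S"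
  by (auto simp: words_def)

lemma subst_words:
  assumes "\<And>x. x \<in> S \<Longrightarrow> f x \<in> words S'" "w \<in> words S"
  shows "subst f w \<in> words S'"
  using assms(2)
proof (induct w)
  case Nil then show ?case by (simp add: words_def)
next
  case (Cons p w)
  then have "fst p \<in> S" "w \<in> words S" by (auto simp: words_def)
  then show ?case using Cons assms(1)[of "fst p"]
    by (auto simp: words_def inv_word_def inv_letter_def)
qed

lemma pres_class_eq: "pres_eq R a b \<Longrightarrow> pres_class S R a = pres_class S R b"
  unfolding pres_class_def by (metis pres_eq.trans pres_eq.sym)

lemma pres_class_mult:
  assumes "a \<in> words S" "b \<in> words S"
  shows "mult (presented_group S R) (pres_class S R a) (pres_class S R b) = pres_class S R (a @ b)"
proof -
  have "\<And>w. w \<in> words S \<Longrightarrow> (\<exists>u\<in>pres_class S R a. \<exists>v\<in>pres_class S R b. pres_eq R (u @ v) w) \<longleftrightarrow> pres_eq R (a @ b) w"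
  proof
    fix w assume "\<exists>u\<in>pres_class S R a. \<exists>v\<in>pres_class S R b. pres_eq R (u @ v) w"
    then obtain u v where "pres_eq R a u" "pres_eq R b v" "pres_eq R (u @ v) w"
      by (auto simp: pres_class_def)
    then show "pres_eq R (a @ b) w" by (blast intro: pres_eq.trans pres_cong2)
  next
    fix w assume "pres_eq R (a @ b) w"
    moreover have "a \<in> pres_class S R a" "b \<in> pres_class S R b"
      using assms by (auto simp: pres_class_def pres_eq.refl)
    ultimately show "\<exists>u\<in>pres_class S R a. \<exists>v\<in>pres_class S R b. pres_eq R (u @ v) w" by blast
  qed
  then show ?thesis by (auto simp: presented_group_def pres_class_def)
qed

lemma pres_class_some:
  assumes "a \<in> words S"
  shows "(SOME w. w \<in> pres_class S R a) \<in> words S \<and> pres_eq R a (SOME w. w \<in> pres_class S R a)"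
proof -
  have "a \<in> pres_class S R a" using assms by (simp add: pres_class_def pres_eq.refl)
  then have "(SOME w. w \<in> pres_class S R a) \<in> pres_class S R a" by (rule someI)
  then show ?thesis by (simp add: pres_class_def)
qed

definition ind_map :: "'h set \<Rightarrow> 'h word set \<Rightarrow> ('g \<Rightarrow> 'h word) \<Rightarrow> 'g word set \<Rightarrow> 'h word set" where
  "ind_map S' R' f A = pres_class S' R' (subst f (SOME w. w \<in> A))"

lemma ind_map_class:
  assumes hr: "\<And>r. r \<in> R \<Longrightarrow> pres_eq R' (subst f r) []" and "a \<in> words S"
  shows "ind_map S' R' f (pres_class S R a) = pres_class S' R' (subst f a)"
proof -
  have "pres_eq R a (SOME w. w \<in> pres_class S R a)" using pres_class_some[OF assms(2), of R] by blast
  then have "pres_eq R' (subst f a) (subst f (SOME w. w \<in> pres_class S R a))" using subst_pres[where R=R and R'=R' and f=f] hr by blast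
  then show ?thesis unfolding ind_map_def by (metis pres_class_eq pres_eq.sym)
qed

lemma presented_iso:
  assumes hf: "\<And>r. r \<in> R \<Longrightarrow> pres_eq R' (subst f r) []"
    and hg: "\<And>r. r \<in> R' \<Longrightarrow> pres_eq R (subst g r) []"
    and fw: "\<And>x. x \<in> S \<Longrightarrow> f x \<in> words S'"
    and gw: "\<And>x. x \<in> S' \<Longrightarrow> g x \<in> words S"
    and gf: "\<And>x. x \<in> S \<Longrightarrow> pres_eq R (subst g (f x)) [(x, True)]"
    and fg: "\<And>x. x \<in> S' \<Longrightarrow> pres_eq R' (subst f (g x)) [(x, True)]"
  shows "presented_group S R \<cong> presented_group S' R'"
proof -
  let ?h = "ind_map S' R' f" and ?k = "ind_map S R g"
  have hc: "?h (pres_class S R a) = pres_class S' R' (subst f a)" if "a \<in> words S" for a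
    using ind_map_class[OF hf that] .
  have kc: "?k (pres_class S' R' a) = pres_class S R (subst g a)" if "a \<in> words S'" for a
    using ind_map_class[OF hg that] .
  have hom: "?h \<in> hom (presented_group S R) (presented_group S' R')"
  proof (rule homI)
    fix x assume "x \<in> carrier (presented_group S R)"
    then obtain a where "a \<in> words S" "x = pres_class S R a" by (auto simp: presented_group_def)
    then show "?h x \<in> carrier (presented_group S' R')"
      using hc subst_words[of S f S', OF fw] by (auto simp: presented_group_def)
  next
    fix x y assume "x \<in> carrier (presented_group S R)" "y \<in> carrier (presented_group S R)"
    then obtain a b where ab: "a \<in> words S" "x = pres_class S R a" "b \<in> words S" "y = pres_class S R b"
      by (auto simp: presented_group_def)
    have sa: "subst f a \<in> words S'" "subst f b \<in> words S'" using ab subst_words[of S f S', OF fw] by auto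
    have "x \<otimes>\<^bsub>presented_group S R\<^esub> y = pres_class S R (a @ b)" using ab pres_class_mult by simp
    then have "?h (x \<otimes>\<^bsub>presented_group S R\<^esub> y) = pres_class S' R' (subst f a @ subst f b)"
      using hc ab by simp
    also have "\<dots> = ?h x \<otimes>\<^bsub>presented_group S' R'\<^esub> ?h y"
      using hc ab sa pres_class_mult[of "subst f a" S' "subst f b" R'] by simp
    finally show "?h (x \<otimes>\<^bsub>presented_group S R\<^esub> y) = ?h x \<otimes>\<^bsub>presented_group S' R'\<^esub> ?h y" .
  qed
  have bij: "bij_betw ?h (carrier (presented_group S R)) (carrier (presented_group S' R'))"
  proof (rule bij_betw_byWitness[where f' = ?k])
    show "\<forall>x\<in>carrier (presented_group S R). ?k (?h x) = x"
    proof
      fix x assume "x \<in> carrier (presented_group S R)"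
      then obtain a where a: "a \<in> words S" "x = pres_class S R a" by (auto simp: presented_group_def)
      have "pres_eq R (subst g (subst f a)) a"
        unfolding subst_subst using a(1) gf by (intro subst_letters) (auto simp: words_def)
      then show "?k (?h x) = x" using a hc kc subst_words[of S f S', OF fw] pres_class_eq by metis
    qed
    show "\<forall>x\<in>carrier (presented_group S' R'). ?h (?k x) = x"
    proof
      fix x assume "x \<in> carrier (presented_group S' R')"
      then obtain a where a: "a \<in> words S'" "x = pres_class S' R' a" by (auto simp: presented_group_def)
      have "pres_eq R' (subst f (subst g a)) a"
        unfolding subst_subst using a(1) fg by (intro subst_letters) (auto simp: words_def)
      then show "?h (?k x) = x" using a hc kc subst_words[of S' g S, OF gw] pres_class_eq by metis
    qed
    show "?h ` carrier (presented_group S R) \<subseteq> carrier (presented_group S' R')"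
      using hc subst_words[of S f S', OF fw] by (auto simp: presented_group_def)
    show "?k ` carrier (presented_group S' R') \<subseteq> carrier (presented_group S R)"
      using kc subst_words[of S' g S, OF gw] by (auto simp: presented_group_def)
  qed
  show ?thesis using hom bij by (auto simp: is_iso_def iso_def)
qed



definition F :: "nat \<Rightarrow> ('c \<times> bool) list \<Rightarrow> 'c arc" where
  "F i v = (case find (\<lambda>p. \<not> snd p) (rev v) of None \<Rightarrow> Circ i | Some p \<Rightarrow> Arc (fst p))"

lemma find_append: "find P (xs @ ys) = (case find P xs of None \<Rightarrow> find P ys | Some x \<Rightarrow> Some x)"
  by (induct xs) auto

lemma find_filter: "(\<And>x. x \<in> set xs \<Longrightarrow> Q x \<Longrightarrow> P x) \<Longrightarrow> find Q (filter P xs) = find Q xs"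
  by (induct xs) auto

lemma find_SomeD: "find P xs = Some x \<Longrightarrow> x \<in> set xs \<and> P x"
  by (induct xs) (auto split: if_splits)

lemma find_none_filter: "(\<And>x. x \<in> set xs \<Longrightarrow> \<not> Q x) \<Longrightarrow> find Q xs = None"
  by (induct xs) auto

lemma arc_before_F: "j < length w \<Longrightarrow> arc_before w i j = F i (rotate j w)"
proof -
  assume j: "j < length w"
  have "rotate j w = drop j w @ take j w" using j by (simp add: rotate_drop_take)
  also have "drop j w = w ! j # drop (Suc j) w" using j by (simp add: Cons_nth_drop_Suc)
  finally have "rev (rotate j w) = rev (take j w) @ rev (drop (Suc j) w) @ [w ! j]" by simp
  then show ?thesis by (simp add: arc_before_def F_def)
qed

lemma comp_disjoint:
  "distinct (concat D) \<Longrightarrow> i < length D \<Longrightarrow> i' < length D \<Longrightarrow> p \<in> set (D ! i) \<Longrightarrow> p \<in> set (D ! i') \<Longrightarrow> i = i'"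
proof (induct D arbitrary: i i')
  case Nil then show ?case by simp
next
  case (Cons a D)
  show ?case
  proof (cases i)
    case 0
    show ?thesis
    proof (cases i')
      case (Suc m)
      then have "(a # D) ! i' \<in> set D" using Cons by simp
      then show ?thesis using Cons 0 by (auto simp: set_concat)
    qed (simp add: 0)
  next
    case (Suc m)
    show ?thesis
    proof (cases i')
      case 0
      have "(a # D) ! i \<in> set D" using Cons \<open>i = Suc m\<close> by simp
      then show ?thesis using Cons 0 by (auto simp: set_concat)
    next
      case (Suc m') then show ?thesis using Cons \<open>i = Suc m\<close> by auto
    qed
  qed
qed

lemma comp_distinct: "distinct (concat D) \<Longrightarrow> i < length D \<Longrightarrow> distinct (D ! i)"
  by (simp add: distinct_concat_iff)

lemma position_eq:
  assumes "distinct (concat D)" "i < length D" "j < length (D ! i)"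
  shows "position D (D ! i ! j) = (i, j)"
proof -
  let ?P = "\<lambda>ij. fst ij < length D \<and> snd ij < length (D ! fst ij) \<and> D ! fst ij ! snd ij = D ! i ! j"
  have ex: "?P (i, j)" using assms by simp
  have uniq: "ij = (i, j)" if "?P ij" for ij
  proof -
    obtain a b where ab: "ij = (a, b)" by force
    have "a = i" using comp_disjoint[OF assms(1), of a i "D ! i ! j"] that ab assms
      by (metis fst_conv nth_mem snd_conv)
    moreover have "b = j" using that ab assms \<open>a = i\<close> comp_distinct[OF assms(1,2)]
      by (metis fst_conv snd_conv nth_eq_iff_index_eq)
    ultimately show ?thesis using ab by simp
  qed
  show ?thesis unfolding position_def using someI[of ?P, OF ex] uniq by blast
qed

lemma rot_same:
  assumes "distinct w" "rotate a w = p # r" "rotate b w = p # r'"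
  shows "rotate a w = rotate b w"
proof -
  have ne: "w \<noteq> []" using assms(2) by auto
  have "w ! (a mod length w) = p" using hd_rotate_conv_nth[OF ne, of a] assms(2) by simp
  moreover have "w ! (b mod length w) = p" using hd_rotate_conv_nth[OF ne, of b] assms(3) by simp
  moreover have "a mod length w < length w" "b mod length w < length w" using ne by auto
  ultimately have "a mod length w = b mod length w"
    using assms(1) by (metis nth_eq_iff_index_eq)
  then show ?thesis by (metis rotate_conv_mod)
qed

lemma rot_exists: "p \<in> set w \<Longrightarrow> \<exists>t r. rotate t w = p # r"
proof -
  assume "p \<in> set w"
  then obtain j where j: "j < length w" "w ! j = p" by (auto simp: in_set_conv_nth)
  have "rotate j w = drop j w @ take j w" using j by (simp add: rotate_drop_take)
  also have "drop j w = w ! j # drop (Suc j) w" using j(1) by (simp add: Cons_nth_drop_Suc)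
  finally show ?thesis using j by auto
qed

lemma arc_at_rot:
  assumes "distinct (concat D)" "i < length D" "rotate t (D ! i) = p # r"
  shows "arc_at D p = F i (p # r)"
proof -
  have ne: "D ! i \<noteq> []" using assms(3) by auto
  let ?j = "t mod length (D ! i)"
  have j: "?j < length (D ! i)" using ne by simp
  have pj: "D ! i ! ?j = p" using hd_rotate_conv_nth[OF ne, of t] assms(3) by simp
  have "position D p = (i, ?j)" using position_eq[OF assms(1,2) j] pj by simp
  then have "arc_at D p = arc_before (D ! i) i ?j" by (simp add: arc_at_def)
  also have "\<dots> = F i (rotate ?j (D ! i))" using arc_before_F[OF j] .
  also have "rotate ?j (D ! i) = p # r" using assms(3) by (metis rotate_conv_mod)
  finally show ?thesis .
qed

lemma filter_rotate: "\<exists>t'. filter P (rotate t w) = rotate t' (filter P w)"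
proof -
  let ?m = "t mod length w"
  have "rotate t w = drop ?m w @ take ?m w" by (simp add: rotate_drop_take)
  then have "filter P (rotate t w) = filter P (drop ?m w) @ filter P (take ?m w)" by simp
  also have "\<dots> = rotate (length (filter P (take ?m w))) (filter P (take ?m w) @ filter P (drop ?m w))"
    by (simp add: rotate_append)
  also have "filter P (take ?m w) @ filter P (drop ?m w) = filter P w"
    by (metis append_take_drop_id filter_append)
  finally show ?thesis by blast
qed

lemma F_cases:
  "(F i v = Circ i \<and> (\<forall>x\<in>set v. snd x)) \<or> (\<exists>q\<in>set v. \<not> snd q \<and> F i v = Arc (fst q))"
proof (cases "find (\<lambda>p. \<not> snd p) (rev v)")
  case None
  have "\<forall>x\<in>set v. snd x" using None unfolding find_None_iff by (metis set_rev)
  moreover have "F i v = Circ i" using None by (simp add: F_def)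
  ultimately show ?thesis by blast
next
  case (Some q)
  then have "q \<in> set v" "\<not> snd q" using find_SomeD[OF Some] by auto
  then show ?thesis using Some by (auto simp: F_def)
qed



definition mapw :: "('g \<Rightarrow> 'h) \<Rightarrow> 'g word \<Rightarrow> 'h word" where
  "mapw h w = map (\<lambda>p. (h (fst p), snd p)) w"

lemma subst_mapw: "subst f (mapw h w) = subst (\<lambda>z. f (h z)) w"
  by (induct w) (auto simp: mapw_def)

lemma subst_single: "subst (\<lambda>z. [(h z, True)]) w = mapw h w"
  by (induct w) (auto simp: mapw_def inv_letter_def)

lemma subst_cong: "(\<And>x. x \<in> fst ` set w \<Longrightarrow> f x = g x) \<Longrightarrow> subst f w = subst g w"
  by (induct w) auto

lemma concat_map_filter: "concat (map (filter P) xs) = filter P (concat xs)"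
  by (induct xs) auto

locale vm =
  fixes D' :: "'c gauss" and cs :: "'c list" and ia ib k0 k1 :: nat
    and Z Z' bO :: "('c \<times> bool) list"
  assumes wf': "wf_gauss D'"
    and dcs: "distinct cs" and len2: "length cs \<ge> 2" and ev: "even (length cs)"
    and ia: "ia < length D'" and rotA: "rotate k0 (D' ! ia) = map (\<lambda>c. (c, False)) cs @ Z"
    and ib: "ib < length D'" and rotB: "rotate k1 (D' ! ib) = bO @ Z'"
    and bO: "bO = map (\<lambda>c. (c, True)) cs \<or> bO = map (\<lambda>c. (c, True)) (rev cs)"
begin

definition P :: "'c \<times> bool \<Rightarrow> bool" where "P p \<longleftrightarrow> fst p \<notin> set cs"
definition "D = map (filter P) D'"
definition "bU = map (\<lambda>c. (c, False)) cs"
definition "cn = last cs"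
definition "A0 = F ia (bU @ Z)"
definition "N0 = (if A0 = Arc cn then Circ ia else A0)"
definition "y = F ib (bO @ Z')"
definition "\<rho> z = (if z = Arc cn then N0 else z)"
definition "\<sigma> z = (if z = Circ ia then Arc cn else z)"
definition "intr z \<longleftrightarrow> (\<exists>j < length cs - 1. z = Arc (cs ! j))"

lemma dist': "distinct (concat D')" using wf' by (simp add: wf_gauss_def)

lemma cs_ne: "cs \<noteq> []" using len2 by auto

lemma cn_nth: "cn = cs ! (length cs - 1)" using cs_ne by (simp add: cn_def last_conv_nth)

lemma cn_in: "cn \<in> set cs" using cs_ne by (simp add: cn_def)

lemma not_intr_cn: "\<not> intr (Arc cn)"
  using dcs unfolding intr_def cn_nth by (auto simp: nth_eq_iff_index_eq)

lemma not_intr_nonC: "c \<notin> set cs \<Longrightarrow> \<not> intr (Arc c)"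
  unfolding intr_def by auto

lemma not_intr_Circ: "\<not> intr (Circ i)"
  unfolding intr_def by auto

lemma C_cases: "c \<in> set cs \<Longrightarrow> c = cn \<or> intr (Arc c)"
proof -
  assume "c \<in> set cs"
  then obtain j where j: "j < length cs" "cs ! j = c" by (auto simp: in_set_conv_nth)
  show ?thesis
  proof (cases "j = length cs - 1")
    case True then show ?thesis using j cn_nth by simp
  next
    case False then show ?thesis using j unfolding intr_def by (intro disjI2 exI[of _ j]) auto
  qed
qed

lemma distA: "distinct (bU @ Z)"
  using rotA comp_distinct[OF dist' ia] by (metis bU_def distinct_rotate)

lemma setA: "set (D' ! ia) = set bU \<union> set Z"
  using rotA by (metis bU_def set_append set_rotate)

lemma setB: "set (D' ! ib) = set bO \<union> set Z'"
  using rotB by (metis set_append set_rotate)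

lemma bO_snd: "x \<in> set bO \<Longrightarrow> snd x"
  using bO by auto

lemma bO_set: "c \<in> set cs \<Longrightarrow> (c, True) \<in> set bO"
  using bO by auto

lemma Z_noCU: "x \<in> set Z \<Longrightarrow> \<not> snd x \<Longrightarrow> P x"
proof -
  assume x: "x \<in> set Z" "\<not> snd x"
  show "P x"
  proof (rule ccontr)
    assume "\<not> P x"
    then have "x \<in> set bU" using x by (cases x) (auto simp: P_def bU_def)
    then show False using distA x by auto
  qed
qed

lemma CU_ia: "i < length D' \<Longrightarrow> (c, False) \<in> set (D' ! i) \<Longrightarrow> c \<in> set cs \<Longrightarrow> i = ia"
proof -
  assume a: "i < length D'" "(c, False) \<in> set (D' ! i)" "c \<in> set cs"
  then have "(c, False) \<in> set (D' ! ia)" using setA by (auto simp: bU_def)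
  then show "i = ia" using comp_disjoint[OF dist' a(1) ia] a by blast
qed

lemma noCU_other: "i < length D' \<Longrightarrow> i \<noteq> ia \<Longrightarrow> x \<in> set (D' ! i) \<Longrightarrow> \<not> snd x \<Longrightarrow> P x"
  using CU_ia by (cases x) (auto simp: P_def)

lemma D_nth: "i < length D' \<Longrightarrow> D ! i = filter P (D' ! i)"
  by (simp add: D_def)

lemma D_len: "length D = length D'" by (simp add: D_def)

lemma distD: "distinct (concat D)"
  using dist' by (simp add: D_def concat_map_filter)

lemma setD: "set (concat D) = {x \<in> set (concat D'). P x}"
  by (auto simp: D_def concat_map_filter)

lemma filter_bU: "filter P bU = []"
  by (auto simp: bU_def P_def filter_empty_conv)

lemma find_rev_bU: "find (\<lambda>p. \<not> snd p) (rev bU) = Some (cn, False)"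
proof -
  obtain xs where xs: "cs = xs @ [cn]" using cs_ne unfolding cn_def by (metis append_butlast_last_id)
  show ?thesis unfolding bU_def by (subst xs) simp
qed

lemma find_Z: "find (\<lambda>p. \<not> snd p) (filter P (rev X)) = find (\<lambda>p. \<not> snd p) (rev X)" if "set X \<subseteq> set Z"
  using that Z_noCU by (intro find_filter) auto

lemma A0_eq: "A0 = (case find (\<lambda>p. \<not> snd p) (rev Z) of None \<Rightarrow> Arc cn | Some q \<Rightarrow> Arc (fst q))"
  by (auto simp: A0_def F_def find_append find_rev_bU split: option.splits)

lemma A0_props: "\<not> intr A0" "A0 \<noteq> Circ ia"
proof -
  have "\<not> intr A0 \<and> A0 \<noteq> Circ ia"
  proof (cases "find (\<lambda>p. \<not> snd p) (rev Z)")
    case None then show ?thesis using A0_eq not_intr_cn by simp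
  next
    case (Some q)
    then have "q \<in> set Z" "\<not> snd q" using find_SomeD[OF Some] by auto
    then have "fst q \<notin> set cs" using Z_noCU P_def by blast
    then show ?thesis using A0_eq Some not_intr_nonC by simp
  qed
  then show "\<not> intr A0" "A0 \<noteq> Circ ia" by auto
qed

lemma Kia:
  assumes "p \<in> set Z"
  obtains Z1 Z2 where "Z = Z1 @ p # Z2"
    and "arc_at D' p = F ia (p # Z2 @ bU @ Z1)"
    and "P p \<Longrightarrow> arc_at D p = F ia (p # filter P (Z2 @ bU @ Z1))"
proof -
  obtain Z1 Z2 where Z: "Z = Z1 @ p # Z2" using split_list[OF assms] by blast
  let ?m = "length (bU @ Z1) + k0"
  have "rotate ?m (D' ! ia) = rotate (length (bU @ Z1)) (rotate k0 (D' ! ia))"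
    by (simp add: rotate_rotate)
  also have "\<dots> = p # Z2 @ bU @ Z1"
  proof -
    have e: "rotate k0 (D' ! ia) = (bU @ Z1) @ (p # Z2)" using rotA Z by (simp add: bU_def)
    show ?thesis unfolding e rotate_append by simp
  qed
  finally have r: "rotate ?m (D' ! ia) = p # Z2 @ bU @ Z1" .
  have a1: "arc_at D' p = F ia (p # Z2 @ bU @ Z1)" using arc_at_rot[OF dist' ia r] .
  obtain t' where t': "filter P (rotate ?m (D' ! ia)) = rotate t' (filter P (D' ! ia))"
    using filter_rotate by blast
  have "P p \<Longrightarrow> rotate t' (D ! ia) = p # filter P (Z2 @ bU @ Z1)"
    using t' r D_nth[OF ia] by simp
  then have a2: "P p \<Longrightarrow> arc_at D p = F ia (p # filter P (Z2 @ bU @ Z1))"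
    using arc_at_rot[OF distD] ia D_len by simp
  show ?thesis using that Z a1 a2 by blast
qed


lemma F_filter: "(\<And>x. x \<in> set v \<Longrightarrow> \<not> snd x \<Longrightarrow> P x) \<Longrightarrow> F i (filter P v) = F i v"
  unfolding F_def rev_filter by (subst find_filter) auto

lemma Fa: "F ia (p # Z2 @ bU @ Z1) =
   (case find (\<lambda>p. \<not> snd p) (rev Z1) of None \<Rightarrow> Arc cn | Some q \<Rightarrow> Arc (fst q))"
  by (auto simp: F_def find_append find_rev_bU split: option.splits)

lemma cn_cross: "cn \<in> crossings D'"
proof -
  have "(cn, False) \<in> set (D' ! ia)" using setA cn_in by (auto simp: bU_def)
  then show ?thesis using ia by (auto simp: crossings_def set_concat)
qed

lemma under_cross: "i < length D' \<Longrightarrow> q \<in> set (D' ! i) \<Longrightarrow> \<not> snd q \<Longrightarrow> fst q \<in> crossings D'"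
  by (cases q) (auto simp: crossings_def set_concat)

lemma Kgen:
  assumes i: "i < length D'" and p: "p \<in> set (D' ! i)" and nCU: "snd p \<or> P p"
  shows "\<not> intr (arc_at D' p) \<and> arc_at D' p \<noteq> Circ ia \<and> arc_at D' p \<in> core_gens D'
     \<and> (P p \<longrightarrow> arc_at D p = \<rho> (arc_at D' p))"
proof (cases "i = ia")
  case False
  obtain t r where r: "rotate t (D' ! i) = p # r" using rot_exists[OF p] by blast
  have a1: "arc_at D' p = F i (p # r)" using arc_at_rot[OF dist' i r] .
  have sr: "set (p # r) = set (D' ! i)" using r by (metis set_rotate)
  have nc: "\<And>x. x \<in> set (p # r) \<Longrightarrow> \<not> snd x \<Longrightarrow> P x" using noCU_other[OF i False] sr by blast
  have props: "\<not> intr (F i (p # r)) \<and> F i (p # r) \<noteq> Circ ia \<and> F i (p # r) \<in> core_gens D' \<and> F i (p # r) \<noteq> Arc cn"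
  proof -
    from F_cases[of i "p # r"] show ?thesis
    proof
      assume h: "F i (p # r) = Circ i \<and> (\<forall>x\<in>set (p # r). snd x)"
      then have "\<forall>x\<in>set (D' ! i). snd x" unfolding sr[symmetric] by blast
      then show ?thesis using h False i not_intr_Circ by (auto simp: core_gens_def)
    next
      assume "\<exists>q\<in>set (p # r). \<not> snd q \<and> F i (p # r) = Arc (fst q)"
      then obtain q where q: "q \<in> set (p # r)" "\<not> snd q" "F i (p # r) = Arc (fst q)" by blast
      have "fst q \<notin> set cs" using nc[OF q(1,2)] by (simp add: P_def)
      moreover have "fst q \<in> crossings D'" using under_cross[OF i] q sr by blast
      ultimately show ?thesis using q not_intr_nonC cn_in by (auto simp: core_gens_def)
    qed
  qed
  have "P p \<longrightarrow> arc_at D p = \<rho> (arc_at D' p)"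
  proof
    assume Pp: "P p"
    obtain t' where t': "filter P (rotate t (D' ! i)) = rotate t' (filter P (D' ! i))"
      using filter_rotate by blast
    have "rotate t' (D ! i) = p # filter P r" using t' r Pp D_nth[OF i] by simp
    then have "arc_at D p = F i (p # filter P r)" using arc_at_rot[OF distD] i D_len by simp
    also have "\<dots> = F i (filter P (p # r))" using Pp by simp
    also have "\<dots> = F i (p # r)" using F_filter nc by blast
    finally show "arc_at D p = \<rho> (arc_at D' p)" using a1 props by (simp add: \<rho>_def)
  qed
  then show ?thesis using props a1 by simp
next
  case True
  have pZ: "p \<in> set Z"
  proof -
    have "p \<in> set bU \<union> set Z" using p True setA by simp
    moreover have "p \<notin> set bU" using nCU by (auto simp: bU_def P_def)
    ultimately show ?thesis by blast
  qed
  obtain Z1 Z2 where Z: "Z = Z1 @ p # Z2" and a1: "arc_at D' p = F ia (p # Z2 @ bU @ Z1)"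
    and a2: "P p \<Longrightarrow> arc_at D p = F ia (p # filter P (Z2 @ bU @ Z1))"
    using Kia[OF pZ] by metis
  have Z1s: "set Z1 \<subseteq> set Z" "set (p # Z2) \<subseteq> set Z" using Z by auto
  have Zia: "set Z \<subseteq> set (D' ! ia)" using setA by auto
  show ?thesis
  proof (cases "find (\<lambda>p. \<not> snd p) (rev Z1)")
    case (Some q)
    then have q: "q \<in> set Z" "\<not> snd q" using find_SomeD[OF Some] Z by auto
    have nC: "fst q \<notin> set cs" using Z_noCU[OF q] by (simp add: P_def)
    have a1': "arc_at D' p = Arc (fst q)" using a1 Fa Some by simp
    have "fst q \<in> crossings D'" using under_cross[OF ia, of q] q Zia by blast
    then have g: "Arc (fst q) \<in> core_gens D'" by (auto simp: core_gens_def)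
    have "P p \<longrightarrow> arc_at D p = Arc (fst q)"
    proof
      assume Pp: "P p"
      have "arc_at D p = F ia (p # filter P Z2 @ filter P Z1)" using a2[OF Pp] by (simp add: filter_bU)
      also have "\<dots> = Arc (fst q)"
        using Some find_Z[OF Z1s(1)] by (simp add: F_def rev_filter[symmetric] find_append)
      finally show "arc_at D p = Arc (fst q)" .
    qed
    then show ?thesis using a1' nC not_intr_nonC g cn_in by (auto simp: \<rho>_def)
  next
    case None
    have a1': "arc_at D' p = Arc cn" using a1 Fa None by simp
    have g: "Arc cn \<in> core_gens D'" using cn_cross by (auto simp: core_gens_def)
    have "P p \<longrightarrow> arc_at D p = N0"
    proof
      assume Pp: "P p"
      have "arc_at D p = F ia (filter P (p # Z2) @ filter P Z1)" using a2[OF Pp] Pp by (simp add: filter_bU)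
      also have "\<dots> = (case find (\<lambda>p. \<not> snd p) (rev (p # Z2)) of None \<Rightarrow> Circ ia | Some q \<Rightarrow> Arc (fst q))"
        using None find_Z[OF Z1s(1)] find_Z[OF Z1s(2)]
        by (simp add: F_def rev_filter[symmetric] find_append del: rev.simps)
      also have "\<dots> = N0"
      proof (cases "find (\<lambda>p. \<not> snd p) (rev (p # Z2))")
        case None2: None
        have "A0 = Arc cn" using A0_eq None None2 Z by (simp add: find_append del: rev.simps)
        then show ?thesis using None2 by (simp add: N0_def)
      next
        case (Some q)
        then have q: "q \<in> set Z" "\<not> snd q" using find_SomeD[OF Some] Z by auto
        have nC: "fst q \<notin> set cs" using Z_noCU[OF q] by (simp add: P_def)
        have "A0 = Arc (fst q)" using A0_eq Some Z by (simp add: find_append del: rev.simps)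
        then show ?thesis using Some nC cn_in by (auto simp: N0_def)
      qed
      finally show "arc_at D p = N0" .
    qed
    then show ?thesis using a1' not_intr_cn g by (auto simp: \<rho>_def)
  qed
qed


definition "Aseq k = (if k = 0 then A0 else Arc (cs ! (k - 1)))"

lemma y_eq: "F ib (bO @ Z') = (case find (\<lambda>p. \<not> snd p) (rev Z') of None \<Rightarrow> Circ ib | Some q \<Rightarrow> Arc (fst q))"
proof -
  have "find (\<lambda>p. \<not> snd p) (rev bO) = None" using bO_snd by (intro find_none_filter) auto
  then show ?thesis by (auto simp: F_def find_append split: option.splits)
qed

lemma K2: "c \<in> set cs \<Longrightarrow> arc_at D' (c, True) = y"
proof -
  assume c: "c \<in> set cs"
  obtain B1 B2 where B: "bO = B1 @ (c, True) # B2" using split_list[OF bO_set[OF c]] by blast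
  have "rotate (length B1 + k1) (D' ! ib) = rotate (length B1) (rotate k1 (D' ! ib))"
    by (simp add: rotate_rotate)
  also have "\<dots> = rotate (length B1) (B1 @ ((c, True) # B2 @ Z'))"
    using rotB B by simp
  also have "\<dots> = (c, True) # B2 @ Z' @ B1" by (simp add: rotate_append)
  finally have r: "rotate (length B1 + k1) (D' ! ib) = (c, True) # B2 @ Z' @ B1" .
  have n1: "find (\<lambda>p. \<not> snd p) (rev B1) = None" using bO_snd B by (intro find_none_filter) auto
  have n2: "find (\<lambda>p. \<not> snd p) (rev B2 @ [(c, True)]) = None" using bO_snd B by (intro find_none_filter) auto
  have "arc_at D' (c, True) = F ib ((c, True) # B2 @ Z' @ B1)" using arc_at_rot[OF dist' ib r] .
  also have "\<dots> = (case find (\<lambda>p. \<not> snd p) (rev Z') of None \<Rightarrow> Circ ib | Some q \<Rightarrow> Arc (fst q))"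
    using n1 n2 by (auto simp: F_def find_append split: option.splits)
  finally show ?thesis using y_eq by (simp add: y_def)
qed

lemma K3: "k < length cs \<Longrightarrow> arc_at D' (cs ! k, False) = Aseq k"
proof -
  assume k: "k < length cs"
  have lb: "length bU = length cs" by (simp add: bU_def)
  have dk: "drop k bU = (cs ! k, False) # drop (Suc k) bU" using k lb
    by (metis Cons_nth_drop_Suc bU_def nth_map)
  have "rotate (length (take k bU) + k0) (D' ! ia) = rotate (length (take k bU)) (rotate k0 (D' ! ia))"
    by (simp add: rotate_rotate)
  also have "\<dots> = rotate (length (take k bU)) (take k bU @ (drop k bU @ Z))"
  proof -
    have "take k bU @ (drop k bU @ Z) = rotate k0 (D' ! ia)" using rotA by (metis append_assoc append_take_drop_id bU_def)
    then show ?thesis by simp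
  qed
  also have "\<dots> = (drop k bU @ Z) @ take k bU" by (rule rotate_append)
  finally have r: "rotate (length (take k bU) + k0) (D' ! ia) = (cs ! k, False) # drop (Suc k) bU @ Z @ take k bU"
    using dk by simp
  have a: "arc_at D' (cs ! k, False) = F ia ((cs ! k, False) # drop (Suc k) bU @ Z @ take k bU)"
    using arc_at_rot[OF dist' ia r] .
  show ?thesis
  proof (cases k)
    case 0
    have e: "(cs ! k, False) # drop (Suc k) bU @ Z @ take k bU = bU @ Z"
      using dk 0 by (metis append_Cons append_Nil2 drop_0 take_0)
    have "arc_at D' (cs ! k, False) = F ia (bU @ Z)" unfolding e[symmetric] by (rule a)
    then show ?thesis using 0 by (simp add: Aseq_def A0_def)
  next
    case (Suc m)
    have "take k bU = take m bU @ [(cs ! m, False)]" using Suc k lb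
      by (simp add: take_Suc_conv_app_nth bU_def)
    then show ?thesis using a Suc by (simp add: F_def Aseq_def find_append)
  qed
qed

lemma y_props: "\<not> intr y \<and> y \<noteq> Circ ia \<and> y \<in> core_gens D'"
proof -
  have c: "cs ! 0 \<in> set cs" using cs_ne by simp
  have "(cs ! 0, True) \<in> set (D' ! ib)" using setB bO_set[OF c] by auto
  then have "\<not> intr (arc_at D' (cs ! 0, True)) \<and> arc_at D' (cs ! 0, True) \<noteq> Circ ia \<and> arc_at D' (cs ! 0, True) \<in> core_gens D'"
    using Kgen[OF ib] by simp
  then show ?thesis unfolding K2[OF c] .
qed

lemma crossD: "c \<in> crossings D \<longleftrightarrow> c \<in> crossings D' \<and> c \<notin> set cs"
  unfolding crossings_def setD P_def by simp

lemma CircD: "Circ i \<in> core_gens D \<longleftrightarrow> i < length D' \<and> (\<forall>p\<in>set (filter P (D' ! i)). snd p)"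
proof -
  have "Circ i \<in> core_gens D \<longleftrightarrow> i < length D \<and> (\<forall>p\<in>set (D ! i). snd p)"
    unfolding core_gens_def by blast
  then show ?thesis using D_nth D_len by metis
qed

lemma CircD': "Circ i \<in> core_gens D' \<longleftrightarrow> i < length D' \<and> (\<forall>p\<in>set (D' ! i). snd p)"
  unfolding core_gens_def by blast

lemma ArcD: "Arc c \<in> core_gens D \<longleftrightarrow> c \<in> crossings D"
  by (auto simp: core_gens_def)

lemma ArcD': "Arc c \<in> core_gens D' \<longleftrightarrow> c \<in> crossings D'"
  by (auto simp: core_gens_def)

lemma Circ_ia_notin: "Circ ia \<notin> core_gens D'"
proof -
  have "(cn, False) \<in> set (D' ! ia)" using setA cn_in by (auto simp: bU_def)
  then show ?thesis unfolding CircD' by (metis snd_conv)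
qed

lemma N0_props: "N0 \<in> core_gens D" "Circ ia \<in> core_gens D \<Longrightarrow> N0 = Circ ia" "\<sigma> N0 = A0" "\<rho> A0 = N0"
proof -
  show "\<rho> A0 = N0" by (simp add: \<rho>_def N0_def)
  show "\<sigma> N0 = A0" using A0_props by (auto simp: \<sigma>_def N0_def)
  have fl: "set (filter P (D' ! ia)) = set (filter P Z)" using setA filter_bU
    by (auto simp: bU_def P_def)
  show "N0 \<in> core_gens D"
  proof (cases "find (\<lambda>p. \<not> snd p) (rev Z)")
    case None
    then have "A0 = Arc cn" using A0_eq by simp
    moreover have "\<forall>p\<in>set (filter P (D' ! ia)). snd p"
    proof
      fix p assume "p \<in> set (filter P (D' ! ia))"
      then have "p \<in> set (filter P Z)" using fl by (metis set_filter)
      then have "p \<in> set (rev Z)" by simp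
      then show "snd p" using None unfolding find_None_iff by blast
    qed
    ultimately show ?thesis using ia by (simp add: N0_def CircD)
  next
    case (Some q)
    then have q: "q \<in> set Z" "\<not> snd q" using find_SomeD[OF Some] by auto
    have nC: "fst q \<notin> set cs" using Z_noCU[OF q] by (simp add: P_def)
    have "fst q \<in> crossings D'" using under_cross[OF ia, of q] q setA by blast
    then have "fst q \<in> crossings D" using nC crossD by blast
    moreover have "A0 = Arc (fst q)" using A0_eq Some by simp
    ultimately show ?thesis using nC cn_in by (auto simp: N0_def ArcD)
  qed
  assume "Circ ia \<in> core_gens D"
  then have all: "\<forall>p\<in>set (filter P Z). snd p" using fl CircD by auto
  have "find (\<lambda>p. \<not> snd p) (rev Z) = None"
  proof (rule find_none_filter)
    fix x assume "x \<in> set (rev Z)"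
    then have x: "x \<in> set Z" by simp
    show "\<not> \<not> snd x"
    proof
      assume ns: "\<not> snd x"
      then have "x \<in> set (filter P Z)" using Z_noCU[OF x ns] x by simp
      then show False using all ns by blast
    qed
  qed
  then show "N0 = Circ ia" using A0_eq by (simp add: N0_def)
qed

lemma rhoS: "z \<in> core_gens D' \<Longrightarrow> \<not> intr z \<Longrightarrow> z \<noteq> Circ ia \<Longrightarrow> \<rho> z \<in> core_gens D"
proof (cases z)
  case (Arc c)
  assume z: "z \<in> core_gens D'" "\<not> intr z"
  show ?thesis
  proof (cases "c = cn")
    case True then show ?thesis using Arc N0_props by (simp add: \<rho>_def)
  next
    case False
    then have "c \<notin> set cs" using C_cases z Arc by blast
    then show ?thesis using z Arc False crossD by (simp add: \<rho>_def ArcD ArcD')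
  qed
next
  case (Circ i)
  assume z: "z \<in> core_gens D'" "z \<noteq> Circ ia"
  then show ?thesis using Circ by (auto simp: \<rho>_def CircD CircD')
qed

lemma sigS: "z \<in> core_gens D \<Longrightarrow> \<sigma> z \<in> core_gens D'"
proof (cases z)
  case (Arc c)
  assume "z \<in> core_gens D"
  then show ?thesis using Arc crossD by (simp add: \<sigma>_def ArcD ArcD')
next
  case (Circ i)
  assume z: "z \<in> core_gens D"
  show ?thesis
  proof (cases "i = ia")
    case True then show ?thesis using Circ cn_cross by (simp add: \<sigma>_def ArcD')
  next
    case False
    have zi: "i < length D'" "\<forall>p\<in>set (filter P (D' ! i)). snd p" using z Circ by (auto simp: CircD)
    have "\<forall>p\<in>set (D' ! i). snd p"
    proof
      fix p assume p: "p \<in> set (D' ! i)"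
      show "snd p"
      proof (rule ccontr)
        assume "\<not> snd p"
        then have "P p" using noCU_other[OF zi(1) False p] by blast
        then have "p \<in> set (filter P (D' ! i))" using p by simp
        then show False using zi(2) \<open>\<not> snd p\<close> by blast
      qed
    qed
    then show ?thesis using Circ False z by (auto simp: \<sigma>_def CircD CircD')
  qed
qed

lemma point_comp: "p \<in> set (concat D') \<Longrightarrow> \<exists>i < length D'. p \<in> set (D' ! i)"
proof -
  assume "p \<in> set (concat D')"
  then obtain xs where xs: "xs \<in> set D'" "p \<in> set xs" by auto
  then obtain i where "i < length D'" "D' ! i = xs" by (auto simp: in_set_conv_nth)
  then show ?thesis using xs by blast
qed

lemma core_rel_D: "c \<in> crossings D \<Longrightarrow> core_rel D c = mapw \<rho> (core_rel D' c)"
proof -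
  assume c: "c \<in> crossings D"
  then have c': "c \<in> crossings D'" "c \<notin> set cs" using crossD by auto
  have "(c, False) \<in> set (concat D')" using c' by (simp add: crossings_def)
  moreover then have "(c, True) \<in> set (concat D')" using wf' by (simp add: wf_gauss_def)
  ultimately have "arc_at D (c, b) = \<rho> (arc_at D' (c, b))" for b
  proof -
    assume h: "(c, False) \<in> set (concat D')" "(c, True) \<in> set (concat D')"
    then have "(c, b) \<in> set (concat D')" by (cases b) auto
    then obtain i where i: "i < length D'" "(c, b) \<in> set (D' ! i)" using point_comp by blast
    have "P (c, b)" using c'(2) by (simp add: P_def)
    then show ?thesis using Kgen[OF i] by blast
  qed
  moreover have "\<rho> (Arc c) = Arc c" using c'(2) cn_in by (auto simp: \<rho>_def)
  ultimately show ?thesis by (simp add: core_rel_def mapw_def Let_def)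
qed

lemma core_rel_C: "k < length cs \<Longrightarrow> core_rel D' (cs ! k) = [(y, True), (Aseq k, False), (y, True), (Aseq (Suc k), False)]"
  using K2 K3 by (simp add: core_rel_def Let_def Aseq_def)

end


context vm begin

definition "Y3 = [(\<rho> y, True), (N0, False), (\<rho> y, True)]"
definition "gmap z = (if intr z then (if even (THE j. j < length cs - 1 \<and> z = Arc (cs ! j)) then Y3 else [(N0, True)]) else [(\<rho> z, True)])"
definition "fmap z = [(\<sigma> z, True)]"
definition "E k = (if even k then [(A0, True)] else [(y, True), (A0, False), (y, True)])"

lemma gmap_intr: "j < length cs - 1 \<Longrightarrow> gmap (Arc (cs ! j)) = (if even j then Y3 else [(N0, True)])"
proof -
  assume j: "j < length cs - 1"
  have i: "intr (Arc (cs ! j))" using j by (auto simp: intr_def)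
  have "(THE j'. j' < length cs - 1 \<and> Arc (cs ! j) = Arc (cs ! j')) = j"
  proof (rule the_equality)
    show "j < length cs - 1 \<and> Arc (cs ! j) = Arc (cs ! j)" using j by simp
  next
    fix j' assume "j' < length cs - 1 \<and> Arc (cs ! j) = Arc (cs ! j')"
    then show "j' = j" using j dcs by (auto simp: nth_eq_iff_index_eq)
  qed
  then show ?thesis using i by (simp add: gmap_def)
qed

lemma gmap_ext: "\<not> intr z \<Longrightarrow> gmap z = [(\<rho> z, True)]"
  by (simp add: gmap_def)

lemma Aseq_n: "Aseq (length cs) = Arc cn"
  using cs_ne cn_nth by (simp add: Aseq_def)

lemma gA: "k \<le> length cs \<Longrightarrow> gmap (Aseq k) = (if odd k then Y3 else [(N0, True)])"
proof -
  assume k: "k \<le> length cs"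
  consider "k = 0" | "0 < k" "k < length cs" | "k = length cs" using k by linarith
  then show ?thesis
  proof cases
    case 1 then show ?thesis using A0_props N0_props by (simp add: Aseq_def gmap_ext)
  next
    case 2
    then have "gmap (Aseq k) = gmap (Arc (cs ! (k - 1)))" by (simp add: Aseq_def)
    also have "\<dots> = (if even (k - 1) then Y3 else [(N0, True)])" using 2 by (intro gmap_intr) linarith
    finally show ?thesis using 2 by auto
  next
    case 3 then show ?thesis using Aseq_n not_intr_cn ev by (simp add: gmap_ext \<rho>_def)
  qed
qed

lemma cs_cross: "k < length cs \<Longrightarrow> cs ! k \<in> crossings D'"
proof -
  assume k: "k < length cs"
  have "(cs ! k, False) \<in> set (D' ! ia)" using setA k by (auto simp: bU_def)
  then show ?thesis using under_cross[OF ia] by fastforce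
qed

lemma canc: "pres_eq R (u @ [(g, b), (g, \<not> b)] @ v) (u @ v)"
  by (rule pres_eq.cancel)

lemma chain1: "k < length cs \<Longrightarrow>
  pres_eq (core_rels D') [(Aseq (Suc k), True)] [(y, True), (Aseq k, False), (y, True)]"
proof -
  assume k: "k < length cs"
  let ?r = "core_rel D' (cs ! k)"
  let ?R = "core_rels D'"
  let ?A = "Aseq (Suc k)"
  have "?r \<in> ?R" using cs_cross[OF k] by (simp add: core_rels_def)
  then have "pres_eq ?R ([] @ ?r @ [(?A, True)]) ([] @ [] @ [(?A, True)])"
    by (intro pres_cong pres_rel_nil)
  then have 1: "pres_eq ?R [(y, True), (Aseq k, False), (y, True), (?A, False), (?A, True)] [(?A, True)]"
    using core_rel_C[OF k] by simp
  have 2: "pres_eq ?R [(y, True), (Aseq k, False), (y, True), (?A, False), (?A, True)] [(y, True), (Aseq k, False), (y, True)]"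
    using canc[of ?R "[(y, True), (Aseq k, False), (y, True)]" ?A False "[]"] by simp
  show ?thesis by (rule pres_eq.trans[OF pres_eq.sym[OF 1] 2])
qed

lemma chain: "k \<le> length cs \<Longrightarrow> pres_eq (core_rels D') [(Aseq k, True)] (E k)"
proof (induct k)
  case 0 then show ?case by (simp add: Aseq_def E_def pres_eq.refl)
next
  case (Suc k)
  let ?R = "core_rels D'"
  have k: "k < length cs" using Suc by simp
  have IH: "pres_eq ?R [(Aseq k, True)] (E k)" using Suc by simp
  have c1: "pres_eq ?R [(Aseq (Suc k), True)] ([(y, True)] @ inv_word [(Aseq k, True)] @ [(y, True)])"
    using chain1[OF k] by (simp add: inv_letter_def)
  have c2: "pres_eq ?R ([(y, True)] @ inv_word [(Aseq k, True)] @ [(y, True)]) ([(y, True)] @ inv_word (E k) @ [(y, True)])"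
    by (intro pres_cong pres_inv_cong IH)
  have c3: "pres_eq ?R ([(y, True)] @ inv_word (E k) @ [(y, True)]) (E (Suc k))"
  proof (cases "even k")
    case True then show ?thesis by (simp add: E_def inv_letter_def pres_eq.refl)
  next
    case False
    have a: "pres_eq ?R [(y, True), (y, False), (A0, True), (y, False), (y, True)] [(A0, True), (y, False), (y, True)]"
      using canc[of ?R "[]" y True "[(A0, True), (y, False), (y, True)]"] by simp
    have b: "pres_eq ?R [(A0, True), (y, False), (y, True)] [(A0, True)]"
      using canc[of ?R "[(A0, True)]" y False "[]"] by simp
    have e: "[(y, True)] @ inv_word (E k) @ [(y, True)] = [(y, True), (y, False), (A0, True), (y, False), (y, True)]"
      "E (Suc k) = [(A0, True)]" using False by (simp_all add: E_def inv_letter_def)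
    show ?thesis unfolding e by (rule pres_eq.trans[OF a b])
  qed
  show ?case by (rule pres_eq.trans[OF pres_eq.trans[OF c1 c2] c3])
qed

lemma AnA0: "pres_eq (core_rels D') [(Arc cn, True)] [(A0, True)]"
  using chain[of "length cs"] ev Aseq_n by (simp add: E_def)

lemma EQL: "\<not> intr z \<Longrightarrow> z \<noteq> Circ ia \<Longrightarrow> pres_eq (core_rels D') [(\<sigma> (\<rho> z), True)] [(z, True)]"
proof (cases "z = Arc cn")
  case True
  have "\<sigma> (\<rho> z) = A0" using True N0_props by (simp add: \<rho>_def)
  then show ?thesis using pres_eq.sym[OF AnA0] True by simp
next
  case False
  assume "z \<noteq> Circ ia"
  then show ?thesis using False by (simp add: \<rho>_def \<sigma>_def pres_eq.refl)
qed

lemma arcs_ok: "c \<in> crossings D' \<Longrightarrow> b \<or> c \<notin> set cs \<Longrightarrow>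
  \<not> intr (arc_at D' (c, b)) \<and> arc_at D' (c, b) \<noteq> Circ ia \<and> arc_at D' (c, b) \<in> core_gens D'"
proof -
  assume c: "c \<in> crossings D'" and b: "b \<or> c \<notin> set cs"
  have "(c, False) \<in> set (concat D')" using c by (simp add: crossings_def)
  moreover then have "(c, True) \<in> set (concat D')" using wf' by (simp add: wf_gauss_def)
  ultimately have "(c, b) \<in> set (concat D')" by (cases b) auto
  then obtain i where i: "i < length D'" "(c, b) \<in> set (D' ! i)" using point_comp by blast
  have "snd (c, b) \<or> P (c, b)" using b by (simp add: P_def)
  then show ?thesis using Kgen[OF i] by blast
qed

lemma rel_letters: "c \<in> crossings D' \<Longrightarrow> c \<notin> set cs \<Longrightarrow> x \<in> fst ` set (core_rel D' c) \<Longrightarrow>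
   \<not> intr x \<and> x \<noteq> Circ ia"
  using arcs_ok[of c True] arcs_ok[of c False] not_intr_nonC
  by (auto simp: core_rel_def Let_def)

lemma hf: "r \<in> core_rels D \<Longrightarrow> pres_eq (core_rels D') (subst fmap r) []"
proof -
  assume "r \<in> core_rels D"
  then obtain c where c: "c \<in> crossings D" "r = core_rel D c" by (auto simp: core_rels_def)
  have c': "c \<in> crossings D'" "c \<notin> set cs" using c crossD by auto
  have "subst fmap r = subst (\<lambda>z. [(\<sigma> (\<rho> z), True)]) (core_rel D' c)"
    using c core_rel_D by (simp add: subst_mapw fmap_def)
  also have "pres_eq (core_rels D') \<dots> (core_rel D' c)"
    using rel_letters[OF c'] EQL by (intro subst_letters) auto
  finally have 1: "pres_eq (core_rels D') (subst fmap r) (core_rel D' c)" .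
  have "pres_eq (core_rels D') (core_rel D' c) []" using c' by (intro pres_rel_nil) (simp add: core_rels_def)
  then show ?thesis by (rule pres_eq.trans[OF 1])
qed

lemma hg: "r \<in> core_rels D' \<Longrightarrow> pres_eq (core_rels D) (subst gmap r) []"
proof -
  assume "r \<in> core_rels D'"
  then obtain c where c: "c \<in> crossings D'" "r = core_rel D' c" by (auto simp: core_rels_def)
  let ?R = "core_rels D"
  show ?thesis
  proof (cases "c \<in> set cs")
    case False
    have cD: "c \<in> crossings D" using c False crossD by auto
    have "subst gmap r = subst (\<lambda>z. [(\<rho> z, True)]) r"
      using rel_letters[OF c(1) False] c by (intro subst_cong) (simp add: gmap_ext)
    also have "\<dots> = core_rel D c" using core_rel_D[OF cD] c by (simp add: subst_single)
    finally show ?thesis using cD by (simp add: pres_rel_nil core_rels_def)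
  next
    case True
    then obtain k where k: "k < length cs" "c = cs ! k" by (auto simp: in_set_conv_nth)
    have gy: "gmap y = [(\<rho> y, True)]" using y_props gmap_ext by blast
    have "subst gmap r = gmap y @ inv_word (gmap (Aseq k)) @ gmap y @ inv_word (gmap (Aseq (Suc k)))"
      using core_rel_C[OF k(1)] c k by simp
    also have "\<dots> = [(\<rho> y, True)] @ inv_word (if odd k then Y3 else [(N0, True)]) @ [(\<rho> y, True)]
        @ inv_word (if odd (Suc k) then Y3 else [(N0, True)])"
      using gy gA[of k] gA[of "Suc k"] k by simp
    finally have s: "subst gmap r = \<dots>" .
    show ?thesis
    proof (cases "odd k")
      case False
      have "pres_eq ?R ([] @ Y3 @ inv_word Y3 @ []) ([] @ [])" by (rule pres_cancel_word)
      then show ?thesis using s False by (simp add: Y3_def inv_letter_def)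
    next
      case True
      let ?Y = "\<rho> y"
      have e: "subst gmap r = [(?Y, True), (?Y, False), (N0, True), (?Y, False), (?Y, True), (N0, False)]"
        using s True by (simp add: Y3_def inv_letter_def)
      have a: "pres_eq ?R [(?Y, True), (?Y, False), (N0, True), (?Y, False), (?Y, True), (N0, False)]
                [(N0, True), (?Y, False), (?Y, True), (N0, False)]"
        using canc[of ?R "[]" ?Y True "[(N0, True), (?Y, False), (?Y, True), (N0, False)]"] by simp
      have b: "pres_eq ?R [(N0, True), (?Y, False), (?Y, True), (N0, False)] [(N0, True), (N0, False)]"
        using canc[of ?R "[(N0, True)]" ?Y False "[(N0, False)]"] by simp
      have c: "pres_eq ?R [(N0, True), (N0, False)] []"
        using canc[of ?R "[]" N0 True "[]"] by simp
      show ?thesis unfolding e by (rule pres_eq.trans[OF pres_eq.trans[OF a b] c])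
    qed
  qed
qed

lemma fw: "x \<in> core_gens D \<Longrightarrow> fmap x \<in> words (core_gens D')"
  using sigS by (simp add: fmap_def words_def)

lemma gw: "x \<in> core_gens D' \<Longrightarrow> gmap x \<in> words (core_gens D)"
proof (cases "intr x")
  case True
  assume x: "x \<in> core_gens D'"
  have "\<rho> y \<in> core_gens D" using rhoS y_props by blast
  then show ?thesis using N0_props True by (simp add: gmap_def Y3_def words_def)
next
  case False
  assume x: "x \<in> core_gens D'"
  have "x \<noteq> Circ ia" using x Circ_ia_notin by blast
  then show ?thesis using rhoS[OF x False] False by (simp add: gmap_ext words_def)
qed

lemma gf: "x \<in> core_gens D \<Longrightarrow> pres_eq (core_rels D) (subst gmap (fmap x)) [(x, True)]"
proof -
  assume x: "x \<in> core_gens D"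
  have "gmap (\<sigma> x) = [(x, True)]"
  proof (cases "x = Circ ia")
    case True
    then show ?thesis using x N0_props not_intr_cn by (simp add: \<sigma>_def gmap_ext \<rho>_def)
  next
    case False
    have ni: "\<not> intr x" and ncn: "x \<noteq> Arc cn"
    proof -
      show "\<not> intr x"
      proof (cases x)
        case (Arc c) then show ?thesis using x crossD ArcD not_intr_nonC by blast
      qed (simp add: not_intr_Circ)
      show "x \<noteq> Arc cn" using x crossD ArcD cn_in by blast
    qed
    then show ?thesis using False by (simp add: \<sigma>_def gmap_ext \<rho>_def)
  qed
  then show ?thesis by (simp add: fmap_def pres_eq.refl)
qed

lemma fg: "x \<in> core_gens D' \<Longrightarrow> pres_eq (core_rels D') (subst fmap (gmap x)) [(x, True)]"
proof (cases "intr x")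
  case True
  then obtain j where j: "j < length cs - 1" "x = Arc (cs ! j)" by (auto simp: intr_def)
  have xa: "x = Aseq (Suc j)" using j by (simp add: Aseq_def)
  have ch: "pres_eq (core_rels D') [(x, True)] (E (Suc j))" using chain[of "Suc j"] xa j by simp
  show ?thesis
  proof (cases "even j")
    case True
    have "subst fmap (gmap x) = subst (\<lambda>z. [(\<sigma> (\<rho> z), True)]) [(y, True), (A0, False), (y, True)]"
      using j True N0_props by (simp add: gmap_intr Y3_def fmap_def inv_letter_def)
    also have "pres_eq (core_rels D') \<dots> [(y, True), (A0, False), (y, True)]"
      using y_props A0_props EQL by (intro subst_letters) auto
    finally have "pres_eq (core_rels D') (subst fmap (gmap x)) (E (Suc j))" using True by (simp add: E_def)
    then show ?thesis by (rule pres_eq.trans[OF _ pres_eq.sym[OF ch]])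
  next
    case False
    have "subst fmap (gmap x) = [(A0, True)]"
      using j False N0_props by (simp add: gmap_intr fmap_def)
    moreover have "E (Suc j) = [(A0, True)]" using False by (simp add: E_def)
    ultimately show ?thesis using pres_eq.sym[OF ch] by simp
  qed
next
  case False
  assume x: "x \<in> core_gens D'"
  have "x \<noteq> Circ ia" using x Circ_ia_notin by blast
  then show ?thesis using EQL[OF False] False by (simp add: gmap_ext fmap_def)
qed

theorem iso_main: "core_group D \<cong> core_group D'"
  unfolding core_group_def
  by (rule presented_iso[where f = fmap and g = gmap]) (auto intro: hf hg fw gw gf fg)

end


lemma cyc_block_rot: "cyc_block w xs \<Longrightarrow> \<exists>k. rotate k w = xs @ drop (length xs) (rotate k w)"
  unfolding cyc_block_def by (metis append_take_drop_id)

theorem proposition6p2: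
  fixes n :: nat and D D' :: "'c gauss"
  assumes "even n" and "n > 0"
    and "wf_gauss D" and "wf_gauss D'"
    and "vmove n D D'"
  shows "core_group D \<cong> core_group D'"
proof -
  obtain cs where cs: "length cs = n" "distinct cs"
    and DD: "map (filter (\<lambda>p. fst p \<notin> set cs)) D' = D"
    and A: "\<exists>i<length D'. cyc_block (D' ! i) (map (\<lambda>c. (c, False)) cs)"
    and B: "\<exists>i<length D'. cyc_block (D' ! i) (map (\<lambda>c. (c, True)) cs) \<or>
                     cyc_block (D' ! i) (map (\<lambda>c. (c, True)) (rev cs))"
    using assms(5) unfolding vmove_def by blast
  obtain ia where ia: "ia < length D'" "cyc_block (D' ! ia) (map (\<lambda>c. (c, False)) cs)" using A by blast
  obtain k0 where k0: "rotate k0 (D' ! ia) = map (\<lambda>c. (c, False)) cs @ drop n (rotate k0 (D' ! ia))"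
    using cyc_block_rot[OF ia(2)] cs(1) by auto
  obtain ib bO where ib: "ib < length D'" "cyc_block (D' ! ib) bO"
    and bO: "bO = map (\<lambda>c. (c, True)) cs \<or> bO = map (\<lambda>c. (c, True)) (rev cs)" using B by blast
  obtain k1 where k1: "rotate k1 (D' ! ib) = bO @ drop (length bO) (rotate k1 (D' ! ib))"
    using cyc_block_rot[OF ib(2)] by auto
  have "n \<noteq> 1" using assms(1) by auto
  then have n2: "length cs \<ge> 2" using assms(2) cs(1) by linarith
  interpret vm D' cs ia ib k0 k1 "drop n (rotate k0 (D' ! ia))" "drop (length bO) (rotate k1 (D' ! ib))" bO
    using assms(1,4) cs n2 ia(1) k0 ib(1) k1 bO by unfold_locales auto
  have "vm.D D' cs = D" using DD by (simp add: D_def P_def[abs_def])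
  then show ?thesis using iso_main by simp
qed

end
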